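(* Let $\{z_n\}_{n\ge 0}$ be a sequence of positive numbers satisfying the recurrence $$z_{n+1}=a_nz_{n}+b_nz_{n-1}\qquad (n\ge 1),$$ where $a_n>0$ and $b_n<0$. Assume that $a_{n+1}a_n+b_{n+1}>0$ for $n\geq 1$. For each $n$ let $$f_n(x)=\left[(a_{n+1}a_n+b_{n+1})x+a_{n+1}b_n\right](x-a_{n-1})x^6-b_{n-1}(a_nx+b_n)^4.$$ Suppose there exist two sequences $r(n)$ and $s(n)$ and a positive integer $N$ such that for all $n\geq N$: (i) $r(n)\leq\frac{z_{n}}{z_{n-1}}\leq s(n)\leq a_n$; (ii) $8(a_{n+1}a_n+b_{n+1})r(n)+5(a_{n+1}b_{n}-a_{n-1}a_{n+1}a_n-a_{n-1}b_{n+1})\geq0$ and $a_nr(n)+b_n\geq0$; (iii) $f_n''(r(n))>0$, $f_n'(r(n))>0$ and $f_n(s(n))<0$. Then the ratio sequence $\{z_{n+1}/z_n\}_{n\ge N}$ is ratio log-convex.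
   Context: A sequence $\{x_n\}$ of positive numbers is log-convex if $x_{n-1}x_{n+1}\ge x_n^2$ for all indices $n$ for which the three terms are defined. A sequence $\{x_n\}$ of positive numbers is called ratio log-convex if the sequence $\{x_{n+1}/x_n\}$ is log-convex. *)

theory Defs
  imports "HOL-Analysis.Analysis"
begin

definition log_convex :: "(nat \<Rightarrow> real) \<Rightarrow> bool" where
  "log_convex x \<longleftrightarrow> (\<forall>n. x n > 0) \<and> (\<forall>n\<ge>1. x (n - 1) * x (n + 1) \<ge> (x n)^2)"

definition ratio_log_convex :: "(nat \<Rightarrow> real) \<Rightarrow> bool" where
  "ratio_log_convex x \<longleftrightarrow> (\<forall>n. x n > 0) \<and> log_convex (\<lambda>n. x (n + 1) / x n)"

text \<open>The polynomial f_n from the statement (requires n >= 1 for the indices n-1).\<close>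
definition fpoly :: "(nat \<Rightarrow> real) \<Rightarrow> (nat \<Rightarrow> real) \<Rightarrow> nat \<Rightarrow> real \<Rightarrow> real" where
  "fpoly a b n x =
     ((a (n+1) * a n + b (n+1)) * x + a (n+1) * b n) * (x - a (n - 1)) * x^6
     - b (n - 1) * (a n * x + b n)^4"

end

theory Submission
  imports Defs
begin

lemma key_calc:
  fixes A c a' b' a b r s x :: real
  defines "F \<equiv> \<lambda>x. (A * x + c) * (x - a') * x^6 - b' * (a * x + b)^4"
  defines "F1 \<equiv> \<lambda>x. 8*A*x^7 + 7*(c - A*a')*x^6 + 6*(-c*a')*x^5 - 4*b'*a*(a*x+b)^3"
  defines "F2 \<equiv> \<lambda>x. 56*A*x^6 + 42*(c - A*a')*x^5 + 30*(-c*a')*x^4 - 12*b'*a^2*(a*x+b)^2"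
  defines "F3 \<equiv> \<lambda>x. 336*A*x^5 + 210*(c - A*a')*x^4 + 120*(-c*a')*x^3 - 24*b'*a^3*(a*x+b)"
  assumes A: "A > 0" and c: "c < 0" and a': "a' > 0" and b': "b' < 0" and a: "a > 0" and b: "b < 0"
    and ii1: "8*A*r + 5*(c - A*a') \<ge> 0" and ii2: "a*r + b \<ge> 0"
    and d2: "F2 r > 0" and d1: "F1 r > 0" and fs: "F s < 0"
    and rx: "r \<le> x" and xs: "x \<le> s"
  shows "F x < 0" and "\<And>t. DERIV F t :> F1 t" and "\<And>t. DERIV F1 t :> F2 t"
proof -
  show dF: "\<And>t. DERIV F t :> F1 t"
    unfolding F_def F1_def
    by (rule derivative_eq_intros refl | simp)+ (simp add: algebra_simps eval_nat_numeral)
  show dF1: "\<And>t. DERIV F1 t :> F2 t"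
    unfolding F2_def F1_def
    by (rule derivative_eq_intros refl | simp)+ (simp add: algebra_simps eval_nat_numeral)
  have dF2: "\<And>t. DERIV F2 t :> F3 t"
    unfolding F2_def F3_def
    by (rule derivative_eq_intros refl | simp)+ (simp add: algebra_simps eval_nat_numeral)
  have rpos: "r > 0"
  proof -
    have "a * r \<ge> -b" using ii2 by linarith
    hence "a * r > 0" using b by linarith
    thus ?thesis using a by (simp add: zero_less_mult_iff)
  qed
  have F3nn: "F3 t \<ge> 0" if "r \<le> t" for t
  proof -
    have tpos: "t > 0" using rpos that by linarith
    have "8*A*t + 5*(c - A*a') \<ge> 0" using ii1 that A
      by (smt (verit) mult_left_mono)
    hence h1: "42 * t^4 * (8*A*t + 5*(c - A*a')) \<ge> 0" using tpos by simp
    have "c*t^3 < 0" using c tpos by (simp add: mult_neg_pos)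
    hence "a'*(c*t^3) < 0" using a' by (simp add: mult_pos_neg)
    hence h2: "120*(-c*a')*t^3 \<ge> 0" by (simp add: algebra_simps)
    have "a*t + b \<ge> 0" using ii2 that a by (smt (verit) mult_left_mono)
    hence h3: "- 24*b'*a^3*(a*t+b) \<ge> 0" using b' a
      by (simp add: mult_nonneg_nonneg mult_nonpos_nonneg)
    have "F3 t = 42 * t^4 * (8*A*t + 5*(c - A*a')) + 120*(-c*a')*t^3 - 24*b'*a^3*(a*t+b)"
      unfolding F3_def by (simp add: algebra_simps eval_nat_numeral)
    thus ?thesis using h1 h2 h3 by linarith
  qed
  have F2pos: "F2 t > 0" if "r \<le> t" for t
  proof -
    have "F2 r \<le> F2 t"
      by (rule DERIV_nonneg_imp_nondecreasing[OF that]) (use dF2 F3nn in auto)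
    thus ?thesis using d2 by linarith
  qed
  have F1pos: "F1 t > 0" if "r \<le> t" for t
  proof -
    have "F1 r \<le> F1 t"
      by (rule DERIV_nonneg_imp_nondecreasing[OF that]) (use dF1 F2pos in \<open>auto intro: less_imp_le\<close>)
    thus ?thesis using d1 by linarith
  qed
  have "F x \<le> F s"
    by (rule DERIV_nonneg_imp_nondecreasing[OF xs]) (use dF F1pos rx in \<open>force intro: less_imp_le\<close>)
  thus "F x < 0" using fs by linarith
qed


lemma derivs:
  fixes A c a' b' a b :: real
  shows "DERIV (\<lambda>x. (A * x + c) * (x - a') * x^6 - b' * (a * x + b)^4) t :>
           (8*A*t^7 + 7*(c - A*a')*t^6 + 6*(-c*a')*t^5 - 4*b'*a*(a*t+b)^3)"
    and "DERIV (\<lambda>x. 8*A*x^7 + 7*(c - A*a')*x^6 + 6*(-c*a')*x^5 - 4*b'*a*(a*x+b)^3) t :>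
          (56*A*t^6 + 42*(c - A*a')*t^5 + 30*(-c*a')*t^4 - 12*b'*a^2*(a*t+b)^2)"
  by ((rule derivative_eq_intros refl | simp)+, (simp add: algebra_simps eval_nat_numeral))+

lemma fneg:
  fixes z a b r s :: "nat \<Rightarrow> real" and n :: nat
  assumes apos: "\<forall>n. a n > 0"
    and bneg: "\<forall>n. b n < 0"
    and ab: "a (n+1) * a n + b (n+1) > 0"
    and i: "r n \<le> x \<and> x \<le> s n"
    and ii: "8 * (a (n+1) * a n + b (n+1)) * r n
                 + 5 * (a (n+1) * b n - a (n - 1) * a (n+1) * a n - a (n - 1) * b (n+1)) \<ge> 0
               \<and> a n * r n + b n \<ge> 0"
    and iii: "deriv (deriv (fpoly a b n)) (r n) > 0
               \<and> deriv (fpoly a b n) (r n) > 0 \<and> fpoly a b n (s n) < 0"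
  shows "fpoly a b n x < 0"
proof -
  define A where "A = a (n+1) * a n + b (n+1)"
  define c where "c = a (n+1) * b n"
  define a' where "a' = a (n - 1)"
  define b' where "b' = b (n - 1)"
  define aa where "aa = a n"
  define bb where "bb = b n"
  have fp: "fpoly a b n = (\<lambda>x. (A * x + c) * (x - a') * x^6 - b' * (aa * x + bb)^4)"
    by (rule ext) (simp add: fpoly_def A_def c_def a'_def b'_def aa_def bb_def)
  have d1: "deriv (fpoly a b n) = (\<lambda>t. 8*A*t^7 + 7*(c - A*a')*t^6 + 6*(-c*a')*t^5 - 4*b'*aa*(aa*t+bb)^3)"
    unfolding fp by (rule ext, rule DERIV_imp_deriv, rule derivs(1))
  have d2: "deriv (deriv (fpoly a b n)) = (\<lambda>t. 56*A*t^6 + 42*(c - A*a')*t^5 + 30*(-c*a')*t^4 - 12*b'*aa^2*(aa*t+bb)^2)"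
    unfolding d1 by (rule ext, rule DERIV_imp_deriv, rule derivs(2))
  have cneg: "c < 0" unfolding c_def using apos bneg by (simp add: mult_pos_neg)
  have ii1: "8*A*r n + 5*(c - A*a') \<ge> 0" using ii unfolding A_def c_def a'_def
    by (simp add: algebra_simps)
  have Ap: "A > 0" using ab A_def by simp
  have a'p: "a' > 0" using apos a'_def by simp
  have b'n: "b' < 0" using bneg b'_def by simp
  have aap: "aa > 0" using apos aa_def by simp
  have bbn: "bb < 0" using bneg bb_def by simp
  have ii2: "aa * r n + bb \<ge> 0" using ii aa_def bb_def by simp
  have e2: "56*A*(r n)^6 + 42*(c - A*a')*(r n)^5 + 30*(-c*a')*(r n)^4 - 12*b'*aa^2*(aa*(r n)+bb)^2 > 0"
    using iii d2 by simp
  have e1: "8*A*(r n)^7 + 7*(c - A*a')*(r n)^6 + 6*(-c*a')*(r n)^5 - 4*b'*aa*(aa*(r n)+bb)^3 > 0"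
    using iii d1 by simp
  have e0: "(A * s n + c) * (s n - a') * (s n)^6 - b' * (aa * s n + bb)^4 < 0"
    using iii fp by simp
  have "(A * x + c) * (x - a') * x^6 - b' * (aa * x + bb)^4 < 0"
    using key_calc(1)[OF Ap cneg a'p b'n aap bbn ii1 ii2 e2 e1 e0] i by simp
  thus ?thesis using fp by simp
qed


lemma final_ineq: fixes p q u v ww :: real
  assumes pp: "p > 0" "q > 0" "u > 0" "v > 0" "ww > 0" and key: "u^4*p^4 < v * ww*q^6"
  shows "(q / p) / (p / ww) * ((v / u) / (u / q)) \<ge> ((u / q) / (q / p))^2"
proof -
  have L: "(q / p) / (p / ww) * ((v / u) / (u / q)) = (q*ww * v * q)/(p*p*u*u)"
    using pp by (simp add: field_simps)
  have R: "((u / q) / (q / p))^2 = (u*p*(u*p))/(q*q*(q*q))"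
    using pp by (simp add: field_simps power2_eq_square)
  have "(u*p*(u*p)) * (p*p*u*u) \<le> (q*ww * v * q) * (q*q*(q*q))"
    using key by (simp add: algebra_simps eval_nat_numeral)
  hence "(u*p*(u*p))/(q*q*(q*q)) \<le> (q*ww * v * q)/(p*p*u*u)"
    using pp by (simp add: divide_simps)
  thus ?thesis using L R by simp
qed

lemma alg:
  fixes z a b :: "nat \<Rightarrow> real" and n :: nat
  assumes zpos: "\<forall>n. z n > 0"
    and rec: "\<forall>n\<ge>1. z (n+1) = a n * z n + b n * z (n - 1)"
    and bneg: "\<forall>n. b n < 0"
    and n2: "n \<ge> 2"
    and f: "fpoly a b n (z n / z (n - 1)) < 0"
  shows "(z n / z (n-1)) / (z (n-1) / z (n-2)) * ((z (n+2) / z (n+1)) / (z (n+1) / z n))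
          \<ge> ((z (n+1) / z n) / (z n / z (n-1)))^2"
proof -
  define p where "p = z (n-1)"
  define q where "q = z n"
  define u where "u = z (n+1)"
  define v where "v = z (n+2)"
  define w0 where "w0 = z (n-2)"
  have pp: "p > 0" "q > 0" "u > 0" "v > 0" "w0 > 0" using zpos p_def q_def u_def v_def w0_def by auto
  have hu: "u = a n * q + b n * p" using rec n2 u_def q_def p_def by auto
  have hv: "v = a (n+1) * u + b (n+1) * q"
    using rec[rule_format, of "n+1"] n2 u_def q_def v_def by (simp add: numeral_2_eq_2)
  have hq: "q = a (n-1) * p + b (n-1) * w0"
    using rec[rule_format, of "n-1"] n2 q_def p_def w0_def
    by (simp add: numeral_2_eq_2 Suc_diff_Suc)
  have b'n: "b (n-1) < 0" using bneg by simp
  have h1: "(a (n+1) * a n + b (n+1)) * (q/p) + a (n+1) * b n = v/p"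
    using pp by (simp add: hv hu field_simps)
  have h2: "q/p - a (n-1) = b (n-1) * w0 / p" using pp by (simp add: hq field_simps)
  have h3: "a n * (q/p) + b n = u/p" using pp by (simp add: hu field_simps)
  have "fpoly a b n (q/p) = v/p * (b (n-1) * w0 / p) * (q/p)^6 - b (n-1) * (u/p)^4"
    unfolding fpoly_def h1 h2 h3 by simp
  also have "\<dots> = b (n-1) * (v * w0*q^6 - u^4*p^4) / p^8"
    using pp by (simp add: power_divide divide_simps) (simp add: algebra_simps eval_nat_numeral)
  finally have "b (n-1) * (v * w0*q^6 - u^4*p^4) / p^8 < 0" using f p_def q_def by simp
  hence "b (n-1) * (v * w0*q^6 - u^4*p^4) < 0" using pp by (simp add: divide_less_0_iff)
  hence key: "u^4*p^4 < v * w0*q^6" using b'n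
    by (simp add: mult_less_0_iff)
  have "(q / p) / (p / w0) * ((v / u) / (u / q)) \<ge> ((u / q) / (q / p))^2"
    using final_ineq[OF pp key] .
  thus ?thesis unfolding p_def q_def u_def v_def w0_def .
qed

theorem theorem2p11:
  fixes z a b r s :: "nat \<Rightarrow> real" and N :: nat
  assumes zpos: "\<forall>n. z n > 0"
    and rec: "\<forall>n\<ge>1. z (n+1) = a n * z n + b n * z (n - 1)"
    and apos: "\<forall>n. a n > 0"
    and bneg: "\<forall>n. b n < 0"
    and ab: "\<forall>n\<ge>1. a (n+1) * a n + b (n+1) > 0"
    and Npos: "N \<ge> 1"
    and i: "\<forall>n\<ge>N. r n \<le> z n / z (n - 1) \<and> z n / z (n - 1) \<le> s n \<and> s n \<le> a n"
    and ii: "\<forall>n\<ge>N. 8 * (a (n+1) * a n + b (n+1)) * r n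
                 + 5 * (a (n+1) * b n - a (n - 1) * a (n+1) * a n - a (n - 1) * b (n+1)) \<ge> 0
               \<and> a n * r n + b n \<ge> 0"
    and iii: "\<forall>n\<ge>N. deriv (deriv (fpoly a b n)) (r n) > 0
               \<and> deriv (fpoly a b n) (r n) > 0 \<and> fpoly a b n (s n) < 0"
  shows "ratio_log_convex (\<lambda>n. z (n + N + 1) / z (n + N))"
proof -
  define w where "w = (\<lambda>n. z (n + N + 1) / z (n + N))"
  have wpos: "\<forall>n. w n > 0" using zpos unfolding w_def by simp
  have fn: "fpoly a b n (z n / z (n - 1)) < 0" if "n \<ge> N" for n
  proof (rule fneg[OF apos bneg])
    show "a (n+1) * a n + b (n+1) > 0" using ab Npos that by simp
    show "r n \<le> z n / z (n - 1) \<and> z n / z (n - 1) \<le> s n" using i that by simp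
    show "8 * (a (n+1) * a n + b (n+1)) * r n
                 + 5 * (a (n+1) * b n - a (n - 1) * a (n+1) * a n - a (n - 1) * b (n+1)) \<ge> 0
               \<and> a n * r n + b n \<ge> 0" using ii that by blast
    show "deriv (deriv (fpoly a b n)) (r n) > 0
               \<and> deriv (fpoly a b n) (r n) > 0 \<and> fpoly a b n (s n) < 0" using iii that by blast
  qed
  have lc: "(\<lambda>m. w (m+1) / w m) (m - 1) * (\<lambda>m. w (m+1) / w m) (m + 1) \<ge> ((\<lambda>m. w (m+1) / w m) m)^2"
    if m1: "m \<ge> 1" for m
  proof -
    obtain k where k: "m = Suc k" using m1 by (cases m) auto
    define n where "n = k + N + 2"
    have n2: "n \<ge> 2" using n_def by simp
    have "(z n / z (n-1)) / (z (n-1) / z (n-2)) * ((z (n+2) / z (n+1)) / (z (n+1) / z n))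
          \<ge> ((z (n+1) / z n) / (z n / z (n-1)))^2"
      by (rule alg[OF zpos rec bneg n2 fn]) (simp add: n_def)
    moreover have "(\<lambda>m. w (m+1) / w m) (m - 1) = (z n / z (n-1)) / (z (n-1) / z (n-2))"
      by (simp add: w_def k n_def eval_nat_numeral)
    moreover have "(\<lambda>m. w (m+1) / w m) (m + 1) = (z (n+2) / z (n+1)) / (z (n+1) / z n)"
      by (simp add: w_def k n_def eval_nat_numeral)
    moreover have "(\<lambda>m. w (m+1) / w m) m = (z (n+1) / z n) / (z n / z (n-1))"
      by (simp add: w_def k n_def eval_nat_numeral)
    ultimately show ?thesis by simp
  qed
  have wd: "(\<lambda>n. z (n + N + 1) / z (n + N)) = w" by (simp add: w_def)
  show ?thesis
    unfolding wd ratio_log_convex_def log_convex_def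
  proof (intro conjI allI impI)
    fix n show "w n > 0" using wpos by blast
  next
    fix n show "w (n+1) / w n > 0" using wpos by (simp add: divide_pos_pos)
  next
    fix n :: nat assume "n \<ge> 1"
    thus "((\<lambda>m. w (m+1) / w m) n)^2 \<le> (\<lambda>m. w (m+1) / w m) (n - 1) * (\<lambda>m. w (m+1) / w m) (n + 1)"
      using lc by blast
  qed
qed

end
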